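(* Let $k$ be a commutative ring containing $1/2$ and let $A$ be a smooth commutative $k$-algebra such that the $A$-module $\mathrm{Der}_k(A)$ is free with a basis $\tau_1,\dots,\tau_n$ of pairwise commuting derivations; let $\omega_1,\dots,\omega_n$ be the dual basis of $\Omega^1_{A/k}$, so that $df=\sum_r\tau_r(f)\,\omega_r$ for $f\in A$. Let $g=(g^{ij})\in GL_n(A)$ be such that the derivations $\tau'_i=\sum_j g^{ij}\tau_j$ ($i=1,\dots,n$) pairwise commute, let $\omega'_1,\dots,\omega'_n$ be the basis of $\Omega^1_{A/k}$ dual to $(\tau'_i)$ (so $\omega'_i=\sum_p (g^{-1})^{pi}\omega_p$), and let $A=(A^{\alpha\beta})\in GL_m(A)$ be arbitrary. With summation over repeated indices, put $$g^{i\alpha\gamma}=g^{iq}\,\tau_q\big((A^{-1})^{\alpha\mu}\big)A^{\mu\gamma},\qquad h_E^{ij}=\tau_j\big(g^{i\nu\nu}\big)+\tfrac12\,g^{iq}\,\tau_j\big((A^{-1})^{\mu\beta}\big)A^{\beta\gamma}\,\tau_q\big((A^{-1})^{\gamma\nu}\big)A^{\nu\mu},$$ and for $1\le i,j\le n$ define the $1$-form $$B_{ij}=-\tfrac12\big\{g^{i\mu\nu}\,d g^{j\nu\mu}-g^{j\nu\mu}\,d g^{i\mu\nu}\big\}-g^{ip}\tau_p(h_E^{jq})\,\omega_q+g^{jp}\tau_p(h_E^{iq})\,\omega_q-h_E^{jp}\,dg^{ip}+h_E^{ip}\,dg^{jp}.$$ Then $$B_{ij}=-\tfrac12\,\mathrm{tr}\big\{A^{-1}\tau'_i(A)A^{-1}\tau'_j(A)A^{-1}\tau'_r(A)-A^{-1}\tau'_j(A)A^{-1}\tau'_i(A)A^{-1}\tau'_r(A)\big\}\,\omega'_r,$$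 where $\tau'_i(A)$ denotes the matrix obtained by applying $\tau'_i$ entrywise.
   Context: $(A^{-1})^{\alpha\beta}$ denotes the $(\alpha,\beta)$ entry of the inverse matrix, $(g^{-1})^{pi}$ the $(p,i)$ entry of $g^{-1}$; repeated indices are summed (e.g. $g^{i\nu\nu}=\sum_\nu g^{i\nu\nu}$). The algebra $A$ and the matrix $A$ are distinguished by context (the matrix always carries indices or appears inside traces/derivations as a matrix). *)

theory Defs
  imports Main
begin

definition kderiv :: "('k::comm_ring_1 \<Rightarrow> 'a::comm_ring_1) \<Rightarrow> ('a \<Rightarrow> 'a) \<Rightarrow> bool" where
  "kderiv phi D \<longleftrightarrow> (\<forall>x y. D (x + y) = D x + D y)
     \<and> (\<forall>x y. D (x * y) = x * D y + y * D x)
     \<and> (\<forall>c x. D (phi c * x) = phi c * D x)"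

definition is_ring_hom :: "('k::comm_ring_1 \<Rightarrow> 'a::comm_ring_1) \<Rightarrow> bool" where
  "is_ring_hom phi \<longleftrightarrow> phi 1 = 1 \<and> (\<forall>x y. phi (x + y) = phi x + phi y)
     \<and> (\<forall>x y. phi (x * y) = phi x * phi y)"

text \<open>Square matrices of size N as functions on indices below N.\<close>
definition mmul :: "nat \<Rightarrow> (nat \<Rightarrow> nat \<Rightarrow> 'a::comm_ring_1) \<Rightarrow> (nat \<Rightarrow> nat \<Rightarrow> 'a) \<Rightarrow> nat \<Rightarrow> nat \<Rightarrow> 'a" where
  "mmul N X Y = (\<lambda>a b. \<Sum>c<N. X a c * Y c b)"

definition mtr :: "nat \<Rightarrow> (nat \<Rightarrow> nat \<Rightarrow> 'a::comm_ring_1) \<Rightarrow> 'a" where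
  "mtr N X = (\<Sum>a<N. X a a)"

definition is_inverse :: "nat \<Rightarrow> (nat \<Rightarrow> nat \<Rightarrow> 'a::comm_ring_1) \<Rightarrow> (nat \<Rightarrow> nat \<Rightarrow> 'a) \<Rightarrow> bool" where
  "is_inverse N X Y \<longleftrightarrow> (\<forall>a<N. \<forall>b<N.
      mmul N X Y a b = (if a = b then 1 else 0) \<and> mmul N Y X a b = (if a = b then 1 else 0))"

definition tauP :: "nat \<Rightarrow> (nat \<Rightarrow> nat \<Rightarrow> 'a::comm_ring_1) \<Rightarrow> (nat \<Rightarrow> 'a \<Rightarrow> 'a) \<Rightarrow> nat \<Rightarrow> 'a \<Rightarrow> 'a" where
  "tauP n g tau i x = (\<Sum>j<n. g i j * tau j x)"

definition G3 :: "nat \<Rightarrow> nat \<Rightarrow> (nat \<Rightarrow> nat \<Rightarrow> 'a::comm_ring_1) \<Rightarrow> (nat \<Rightarrow> 'a \<Rightarrow> 'a)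
     \<Rightarrow> (nat \<Rightarrow> nat \<Rightarrow> 'a) \<Rightarrow> (nat \<Rightarrow> nat \<Rightarrow> 'a) \<Rightarrow> nat \<Rightarrow> nat \<Rightarrow> nat \<Rightarrow> 'a" where
  "G3 n m g tau Am Ai i \<alpha> \<gamma> = (\<Sum>q<n. \<Sum>\<mu><m. g i q * tau q (Ai \<alpha> \<mu>) * Am \<mu> \<gamma>)"

text \<open>h_E^{ij}; half is the element 1/2 of A\<close>
definition hE :: "'a::comm_ring_1 \<Rightarrow> nat \<Rightarrow> nat \<Rightarrow> (nat \<Rightarrow> nat \<Rightarrow> 'a) \<Rightarrow> (nat \<Rightarrow> 'a \<Rightarrow> 'a)
     \<Rightarrow> (nat \<Rightarrow> nat \<Rightarrow> 'a) \<Rightarrow> (nat \<Rightarrow> nat \<Rightarrow> 'a) \<Rightarrow> nat \<Rightarrow> nat \<Rightarrow> 'a" where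
  "hE half n m g tau Am Ai i j =
     tau j (\<Sum>\<nu><m. G3 n m g tau Am Ai i \<nu> \<nu>)
     + half * (\<Sum>q<n. \<Sum>\<mu><m. \<Sum>\<beta><m. \<Sum>\<gamma><m. \<Sum>\<nu><m.
          g i q * tau j (Ai \<mu> \<beta>) * Am \<beta> \<gamma> * tau q (Ai \<gamma> \<nu>) * Am \<nu> \<mu>)"

text \<open>1-forms are represented by their coordinate vectors w.r.t. the basis omega_1..omega_n
  of Omega^1_{A/k}: the form  sum_q c_q omega_q  is  c.  Thus  df = (\<lambda>q. tau q f)  and
  omega'_r = sum_p (g^{-1})^{pr} omega_p  = (\<lambda>p. gi p r).\<close>
definition dform :: "(nat \<Rightarrow> 'a \<Rightarrow> 'a) \<Rightarrow> 'a \<Rightarrow> nat \<Rightarrow> 'a" where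
  "dform tau f = (\<lambda>q. tau q f)"

definition Bform :: "'a::comm_ring_1 \<Rightarrow> nat \<Rightarrow> nat \<Rightarrow> (nat \<Rightarrow> nat \<Rightarrow> 'a) \<Rightarrow> (nat \<Rightarrow> 'a \<Rightarrow> 'a)
     \<Rightarrow> (nat \<Rightarrow> nat \<Rightarrow> 'a) \<Rightarrow> (nat \<Rightarrow> nat \<Rightarrow> 'a) \<Rightarrow> nat \<Rightarrow> nat \<Rightarrow> nat \<Rightarrow> 'a" where
  "Bform half n m g tau Am Ai i j = (\<lambda>q0.
     - half * (\<Sum>\<mu><m. \<Sum>\<nu><m.
          G3 n m g tau Am Ai i \<mu> \<nu> * dform tau (G3 n m g tau Am Ai j \<nu> \<mu>) q0
        - G3 n m g tau Am Ai j \<nu> \<mu> * dform tau (G3 n m g tau Am Ai i \<mu> \<nu>) q0)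
     - (\<Sum>p<n. g i p * tau p (hE half n m g tau Am Ai j q0))
     + (\<Sum>p<n. g j p * tau p (hE half n m g tau Am Ai i q0))
     - (\<Sum>p<n. hE half n m g tau Am Ai j p * dform tau (g i p) q0)
     + (\<Sum>p<n. hE half n m g tau Am Ai i p * dform tau (g j p) q0))"

definition mapm :: "('a \<Rightarrow> 'a) \<Rightarrow> (nat \<Rightarrow> nat \<Rightarrow> 'a) \<Rightarrow> nat \<Rightarrow> nat \<Rightarrow> 'a" where
  "mapm D X = (\<lambda>a b. D (X a b))"

definition RHSform :: "'a::comm_ring_1 \<Rightarrow> nat \<Rightarrow> nat \<Rightarrow> (nat \<Rightarrow> nat \<Rightarrow> 'a) \<Rightarrow> (nat \<Rightarrow> nat \<Rightarrow> 'a)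
     \<Rightarrow> (nat \<Rightarrow> 'a \<Rightarrow> 'a) \<Rightarrow> (nat \<Rightarrow> nat \<Rightarrow> 'a) \<Rightarrow> (nat \<Rightarrow> nat \<Rightarrow> 'a) \<Rightarrow> nat \<Rightarrow> nat \<Rightarrow> nat \<Rightarrow> 'a" where
  "RHSform half n m g gi tau Am Ai i j = (\<lambda>q0.
     - half * (\<Sum>r<n.
        mtr m (\<lambda>a b.
           mmul m (mmul m (mmul m Ai (mapm (tauP n g tau i) Am))
                           (mmul m Ai (mapm (tauP n g tau j) Am)))
                  (mmul m Ai (mapm (tauP n g tau r) Am)) a b
         - mmul m (mmul m (mmul m Ai (mapm (tauP n g tau j) Am))
                           (mmul m Ai (mapm (tauP n g tau i) Am)))
                  (mmul m Ai (mapm (tauP n g tau r) Am)) a b)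
        * gi q0 r))"

end

theory Submission
  imports Defs
begin


definition isder :: "('a::comm_ring_1 \<Rightarrow> 'a) \<Rightarrow> bool" where
  "isder D \<longleftrightarrow> (\<forall>x y. D (x + y) = D x + D y) \<and> (\<forall>x y. D (x * y) = x * D y + y * D x)"

lemma isder_add: "isder D \<Longrightarrow> D (x + y) = D x + D y"
  unfolding isder_def by blast

lemma isder_mult: "isder D \<Longrightarrow> D (x * y) = x * D y + y * D x"
  unfolding isder_def by blast

lemma isder_zero: "isder D \<Longrightarrow> D 0 = 0"
  using isder_add[of D 0 0] by simp

lemma isder_one: "isder D \<Longrightarrow> D 1 = 0"
  using isder_mult[of D 1 1] by simp

lemma isder_minus: "isder D \<Longrightarrow> D (- x) = - D x"
  using isder_add[of D x "- x"] isder_zero[of D] by (simp add: eq_neg_iff_add_eq_0 add.commute)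

lemma isder_diff: "isder D \<Longrightarrow> D (x - y) = D x - D y"
  using isder_add[of D x "- y"] isder_minus[of D y] by simp

lemma isder_sum: "isder D \<Longrightarrow> D (sum f A) = (\<Sum>a\<in>A. D (f a))"
  by (induct A rule: infinite_finite_induct) (auto simp: isder_zero isder_add)

lemma isder_delta: "isder D \<Longrightarrow> D (if a = b then 1 else 0) = 0"
  by (simp add: isder_zero isder_one)

lemma kderiv_isder: "kderiv phi D \<Longrightarrow> isder D"
  unfolding kderiv_def isder_def by blast

lemma kderiv_const: "kderiv phi D \<Longrightarrow> D (phi c * x) = phi c * D x"
  unfolding kderiv_def by blast

lemma tauP_kderiv:
  assumes "\<forall>r<n. kderiv phi (tau r)"
  shows "kderiv phi (tauP n g tau i)"
proof -
  have a: "tau r (x + y) = tau r x + tau r y" "tau r (x * y) = x * tau r y + y * tau r x"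
    "tau r (phi c * x) = phi c * tau r x" if "r < n" for r x y c
    using assms that unfolding kderiv_def by blast+
  have 1: "tauP n g tau i (x + y) = tauP n g tau i x + tauP n g tau i y" for x y
    unfolding tauP_def by (simp add: a distrib_left sum.distrib)
  have 2: "tauP n g tau i (x * y) = x * tauP n g tau i y + y * tauP n g tau i x" for x y
    unfolding tauP_def by (simp add: a distrib_left sum.distrib sum_distrib_left algebra_simps)
  have 3: "tauP n g tau i (phi c * x) = phi c * tauP n g tau i x" for c x
    unfolding tauP_def sum_distrib_left by (rule sum.cong) (simp_all only: a(3) lessThan_iff mult.left_commute)
  show ?thesis unfolding kderiv_def using 1 2 3 by blast
qed




lemma swap_in: "(\<Sum>c\<in>A. (w c::'a::comm_ring_1) * (\<Sum>x\<in>B. F c x)) = (\<Sum>x\<in>B. \<Sum>c\<in>A. w c * F c x)"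
  by (simp only: sum_distrib_left) (rule sum.swap)

lemma swap_in2: "(\<Sum>c\<in>A. (w c::'a::comm_ring_1) * (\<Sum>x\<in>B. \<Sum>y\<in>C. F c x y)) = (\<Sum>x\<in>B. \<Sum>y\<in>C. \<Sum>c\<in>A. w c * F c x y)"
proof -
  have "(\<Sum>c\<in>A. w c * (\<Sum>x\<in>B. \<Sum>y\<in>C. F c x y)) = (\<Sum>x\<in>B. \<Sum>c\<in>A. w c * (\<Sum>y\<in>C. F c x y))"
    by (rule swap_in)
  also have "\<dots> = (\<Sum>x\<in>B. \<Sum>y\<in>C. \<Sum>c\<in>A. w c * F c x y)"
    by (rule sum.cong[OF refl], rule swap_in)
  finally show ?thesis .
qed

locale L =
  fixes phi :: "'k::comm_ring_1 \<Rightarrow> 'a::comm_ring_1" and n m :: nat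
    and tau :: "nat \<Rightarrow> 'a \<Rightarrow> 'a" and g gi Am Ai :: "nat \<Rightarrow> nat \<Rightarrow> 'a"
  assumes der: "\<forall>r<n. kderiv phi (tau r)"
    and basis: "\<forall>D. kderiv phi D \<longrightarrow>
        (\<exists>!a. (\<forall>r\<ge>n. a r = 0) \<and> D = (\<lambda>x. \<Sum>r<n. a r * tau r x))"
    and comm: "\<forall>r<n. \<forall>s<n. \<forall>x. tau r (tau s x) = tau s (tau r x)"
    and ginv: "is_inverse n g gi"
    and commP: "\<forall>r<n. \<forall>s<n. \<forall>x. tauP n g tau r (tauP n g tau s x) = tauP n g tau s (tauP n g tau r x)"
    and Ainv: "is_inverse m Am Ai"
begin

abbreviation "tP \<equiv> tauP n g tau"

lemma tP_der: "isder (tP i)"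
  using tauP_kderiv[OF der] kderiv_isder by blast

lemma tP_const: "tP i (phi c * x) = phi c * tP i x"
  using tauP_kderiv[OF der] kderiv_const by blast

lemma tau_der: "r < n \<Longrightarrow> isder (tau r)"
  using der kderiv_isder by blast

lemma tau_const: "r < n \<Longrightarrow> tau r (phi c * x) = phi c * tau r x"
  using der kderiv_const by blast

definition X where "X i = mmul m Ai (mapm (tP i) Am)"
definition TH where "TH c = mmul m Ai (mapm (tau c) Am)"
definition t2 :: "(nat \<Rightarrow> nat \<Rightarrow> 'a) \<Rightarrow> (nat \<Rightarrow> nat \<Rightarrow> 'a) \<Rightarrow> 'a" where
  "t2 P Q = (\<Sum>x<m. \<Sum>y<m. P x y * Q y x)"

lemma inv_der:
  assumes D: "isder D" and a: "\<alpha> < m" "\<gamma> < m"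
  shows "(\<Sum>\<mu><m. D (Ai \<alpha> \<mu>) * Am \<mu> \<gamma>) = - mmul m Ai (mapm D Am) \<alpha> \<gamma>"
proof -
  have "mmul m Ai Am \<alpha> \<gamma> = (if \<alpha> = \<gamma> then 1 else 0)"
    using Ainv a unfolding is_inverse_def by blast
  hence "D (mmul m Ai Am \<alpha> \<gamma>) = 0" using isder_zero[OF D] isder_one[OF D] by simp
  hence "(\<Sum>\<mu><m. Ai \<alpha> \<mu> * D (Am \<mu> \<gamma>) + Am \<mu> \<gamma> * D (Ai \<alpha> \<mu>)) = 0"
    unfolding mmul_def by (simp add: isder_sum[OF D] isder_mult[OF D])
  hence "(\<Sum>\<mu><m. Ai \<alpha> \<mu> * D (Am \<mu> \<gamma>)) + (\<Sum>\<mu><m. D (Ai \<alpha> \<mu>) * Am \<mu> \<gamma>) = 0"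
    by (simp only: sum.distrib mult.commute[of "Am _ _"])
  hence "(\<Sum>\<mu><m. D (Ai \<alpha> \<mu>) * Am \<mu> \<gamma>) = - (\<Sum>\<mu><m. Ai \<alpha> \<mu> * D (Am \<mu> \<gamma>))"
    by (simp only: add_eq_0_iff)
  thus ?thesis unfolding mmul_def mapm_def .
qed

lemma inv_der2:
  assumes D: "isder D" and a: "x < m" "c < m"
  shows "D (Ai x c) = - (\<Sum>\<gamma><m. mmul m Ai (mapm D Am) x \<gamma> * Ai \<gamma> c)"
proof -
  have "(\<Sum>\<gamma><m. mmul m Ai (mapm D Am) x \<gamma> * Ai \<gamma> c)
      = (\<Sum>\<gamma><m. - (\<Sum>\<mu><m. D (Ai x \<mu>) * Am \<mu> \<gamma>) * Ai \<gamma> c)"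
    using inv_der[OF D a(1)] by (intro sum.cong) auto
  also have "\<dots> = - (\<Sum>\<gamma><m. \<Sum>\<mu><m. D (Ai x \<mu>) * (Am \<mu> \<gamma> * Ai \<gamma> c))"
    by (simp add: sum_distrib_right sum_negf mult.assoc)
  also have "\<dots> = - (\<Sum>\<mu><m. \<Sum>\<gamma><m. D (Ai x \<mu>) * (Am \<mu> \<gamma> * Ai \<gamma> c))"
    by (rule arg_cong[where f=uminus], rule sum.swap)
  also have "\<dots> = - (\<Sum>\<mu><m. D (Ai x \<mu>) * mmul m Am Ai \<mu> c)"
    by (simp add: sum_distrib_left mmul_def)
  also have "\<dots> = - (\<Sum>\<mu><m. D (Ai x \<mu>) * (if \<mu> = c then 1 else 0))"
    using Ainv a unfolding is_inverse_def by (intro arg_cong[where f=uminus] sum.cong) auto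
  also have "\<dots> = - (\<Sum>\<mu><m. if \<mu> = c then D (Ai x \<mu>) else 0)"
    by (intro arg_cong[where f=uminus] sum.cong) auto
  also have "\<dots> = - D (Ai x c)" using a by (simp only: sum.delta finite_lessThan lessThan_iff if_True)
  finally show ?thesis by simp
qed

lemma G3_eq: "\<alpha> < m \<Longrightarrow> \<gamma> < m \<Longrightarrow> G3 n m g tau Am Ai i \<alpha> \<gamma> = - X i \<alpha> \<gamma>"
proof -
  assume a: "\<alpha> < m" "\<gamma> < m"
  have "G3 n m g tau Am Ai i \<alpha> \<gamma> = (\<Sum>\<mu><m. \<Sum>q<n. g i q * tau q (Ai \<alpha> \<mu>) * Am \<mu> \<gamma>)"
    unfolding G3_def by (rule sum.swap)
  also have "\<dots> = (\<Sum>\<mu><m. tP i (Ai \<alpha> \<mu>) * Am \<mu> \<gamma>)"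
    by (simp add: tauP_def sum_distrib_right)
  also have "\<dots> = - X i \<alpha> \<gamma>" unfolding X_def by (rule inv_der[OF tP_der a])
  finally show ?thesis .
qed

lemma X_lin: "X i a b = (\<Sum>q<n. g i q * TH q a b)"
proof -
  have "X i a b = (\<Sum>c<m. \<Sum>q<n. g i q * (Ai a c * tau q (Am c b)))"
    unfolding X_def mmul_def mapm_def tauP_def
    by (rule sum.cong[OF refl]) (simp add: sum_distrib_left mult_ac)
  also have "\<dots> = (\<Sum>q<n. \<Sum>c<m. g i q * (Ai a c * tau q (Am c b)))"
    by (rule sum.swap)
  also have "\<dots> = (\<Sum>q<n. g i q * TH q a b)"
    unfolding TH_def mmul_def mapm_def by (simp only: sum_distrib_left)
  finally show ?thesis .
qed

lemma t2_comm: "t2 A B = t2 B A"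
  unfolding t2_def by (subst sum.swap) (simp add: mult.commute)

lemma t2_der: assumes D: "isder D" shows "D (t2 A B) = t2 (mapm D A) B + t2 A (mapm D B)"
proof -
  have "D (t2 A B) = (\<Sum>x<m. \<Sum>y<m. D (A x y) * B y x + A x y * D (B y x))"
    unfolding t2_def by (simp add: isder_sum[OF D] isder_mult[OF D] add.commute mult.commute)
  also have "\<dots> = t2 (mapm D A) B + t2 A (mapm D B)"
    unfolding t2_def mapm_def by (simp only: sum.distrib)
  finally show ?thesis .
qed

lemma mtr_mmul: "mtr m (mmul m A B) = t2 A B"
  unfolding mtr_def mmul_def t2_def ..

lemma t2_cyc: "t2 (mmul m A B) C = t2 (mmul m C A) B"
proof -
  have "t2 (mmul m A B) C = (\<Sum>x<m. \<Sum>y<m. \<Sum>k<m. A x k * B k y * C y x)"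
    unfolding t2_def mmul_def by (simp add: sum_distrib_right)
  also have "\<dots> = (\<Sum>x<m. \<Sum>k<m. \<Sum>y<m. A x k * B k y * C y x)"
    by (rule sum.cong[OF refl], rule sum.swap)
  finally have 1: "t2 (mmul m A B) C = (\<Sum>x<m. \<Sum>k<m. \<Sum>y<m. A x k * B k y * C y x)" .
  have "t2 (mmul m C A) B = (\<Sum>y<m. \<Sum>k<m. \<Sum>x<m. C y x * A x k * B k y)"
    unfolding t2_def mmul_def by (simp add: sum_distrib_right)
  also have "\<dots> = (\<Sum>y<m. \<Sum>x<m. \<Sum>k<m. C y x * A x k * B k y)"
    by (rule sum.cong[OF refl], rule sum.swap)
  also have "\<dots> = (\<Sum>x<m. \<Sum>y<m. \<Sum>k<m. C y x * A x k * B k y)"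
    by (rule sum.swap)
  also have "\<dots> = (\<Sum>x<m. \<Sum>k<m. \<Sum>y<m. C y x * A x k * B k y)"
    by (rule sum.cong[OF refl], rule sum.swap)
  also have "\<dots> = (\<Sum>x<m. \<Sum>k<m. \<Sum>y<m. A x k * B k y * C y x)"
    by (intro sum.cong refl) (simp add: mult_ac)
  finally show ?thesis using 1 by simp
qed

lemma MC0:
  assumes xy: "x < m" "y < m"
  shows "tP a (X b x y) = (\<Sum>c<m. Ai x c * tP a (tP b (Am c y))) - mmul m (X a) (X b) x y"
proof -
  have "tP a (X b x y) = (\<Sum>c<m. Ai x c * tP a (tP b (Am c y)) + tP b (Am c y) * tP a (Ai x c))"
    unfolding X_def mmul_def mapm_def by (simp add: isder_sum[OF tP_der] isder_mult[OF tP_der])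
  also have "\<dots> = (\<Sum>c<m. Ai x c * tP a (tP b (Am c y))) + (\<Sum>c<m. tP b (Am c y) * tP a (Ai x c))"
    by (rule sum.distrib)
  also have "(\<Sum>c<m. tP b (Am c y) * tP a (Ai x c))
      = (\<Sum>c<m. - (\<Sum>\<gamma><m. X a x \<gamma> * (Ai \<gamma> c * tP b (Am c y))))"
    by (rule sum.cong[OF refl], subst inv_der2[OF tP_der xy(1)], simp,
        simp add: X_def sum_distrib_left mult_ac)
  also have "\<dots> = - (\<Sum>\<gamma><m. \<Sum>c<m. X a x \<gamma> * (Ai \<gamma> c * tP b (Am c y)))"
    by (simp only: sum_negf, rule arg_cong[where f=uminus], rule sum.swap)
  also have "\<dots> = - mmul m (X a) (X b) x y"
  proof -
    have e: "X b \<gamma> y = (\<Sum>c<m. Ai \<gamma> c * tP b (Am c y))" for \<gamma>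
      by (simp add: X_def mmul_def mapm_def)
    show ?thesis by (simp only: mmul_def e sum_distrib_left)
  qed
  finally show ?thesis by simp
qed

lemma MC:
  assumes ab: "a < n" "b < n" and xy: "x < m" "y < m"
  shows "tP a (X b x y) = tP b (X a x y) - mmul m (X a) (X b) x y + mmul m (X b) (X a) x y"
proof -
  have "(\<Sum>c<m. Ai x c * tP a (tP b (Am c y))) = (\<Sum>c<m. Ai x c * tP b (tP a (Am c y)))"
    using commP ab by (intro sum.cong refl) metis
  note s = this
  show ?thesis unfolding MC0[OF xy, of a b] MC0[OF xy, of b a] s by simp
qed

end



context L
begin

lemma trG3: "(\<Sum>\<nu><m. G3 n m g tau Am Ai j \<nu> \<nu>) = - mtr m (X j)"
  unfolding mtr_def by (simp add: G3_eq sum_negf)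

lemma S_eq:
  assumes c: "c < n"
  shows "(\<Sum>q<n. \<Sum>\<mu><m. \<Sum>\<beta><m. \<Sum>\<gamma><m. \<Sum>\<nu><m.
          g j q * tau c (Ai \<mu> \<beta>) * Am \<beta> \<gamma> * tau q (Ai \<gamma> \<nu>) * Am \<nu> \<mu>)
       = t2 (TH c) (X j)"
proof -
  define P where "P \<mu> \<gamma> = (\<Sum>\<beta><m. tau c (Ai \<mu> \<beta>) * Am \<beta> \<gamma>)" for \<mu> \<gamma>
  define Q where "Q q \<gamma> \<mu> = (\<Sum>\<nu><m. tau q (Ai \<gamma> \<nu>) * Am \<nu> \<mu>)" for q \<gamma> \<mu>
  have "(\<Sum>q<n. \<Sum>\<mu><m. \<Sum>\<beta><m. \<Sum>\<gamma><m. \<Sum>\<nu><m.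
          g j q * tau c (Ai \<mu> \<beta>) * Am \<beta> \<gamma> * tau q (Ai \<gamma> \<nu>) * Am \<nu> \<mu>)
      = (\<Sum>q<n. \<Sum>\<mu><m. \<Sum>\<beta><m. \<Sum>\<gamma><m. g j q * tau c (Ai \<mu> \<beta>) * Am \<beta> \<gamma> * Q q \<gamma> \<mu>)"
    by (simp add: Q_def sum_distrib_left mult.assoc)
  also have "\<dots> = (\<Sum>q<n. \<Sum>\<mu><m. \<Sum>\<gamma><m. \<Sum>\<beta><m. g j q * tau c (Ai \<mu> \<beta>) * Am \<beta> \<gamma> * Q q \<gamma> \<mu>)"
    by (rule sum.cong[OF refl], rule sum.cong[OF refl], rule sum.swap)
  also have "\<dots> = (\<Sum>q<n. \<Sum>\<mu><m. \<Sum>\<gamma><m. g j q * P \<mu> \<gamma> * Q q \<gamma> \<mu>)"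
    by (simp add: P_def sum_distrib_left sum_distrib_right mult_ac)
  also have "\<dots> = (\<Sum>\<mu><m. \<Sum>q<n. \<Sum>\<gamma><m. g j q * P \<mu> \<gamma> * Q q \<gamma> \<mu>)"
    by (rule sum.swap)
  also have "\<dots> = (\<Sum>\<mu><m. \<Sum>\<gamma><m. \<Sum>q<n. g j q * P \<mu> \<gamma> * Q q \<gamma> \<mu>)"
    by (rule sum.cong[OF refl], rule sum.swap)
  also have "\<dots> = (\<Sum>\<mu><m. \<Sum>\<gamma><m. P \<mu> \<gamma> * (\<Sum>q<n. g j q * Q q \<gamma> \<mu>))"
    by (simp add: sum_distrib_left mult_ac)
  also have "\<dots> = (\<Sum>\<mu><m. \<Sum>\<gamma><m. TH c \<mu> \<gamma> * X j \<gamma> \<mu>)"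
  proof (intro sum.cong refl)
    fix \<mu> \<gamma> assume a: "\<mu> \<in> {..<m}" "\<gamma> \<in> {..<m}"
    have p: "P \<mu> \<gamma> = - TH c \<mu> \<gamma>"
      unfolding P_def TH_def using inv_der[OF tau_der[OF c]] a by simp
    have "(\<Sum>q<n. g j q * Q q \<gamma> \<mu>) = (\<Sum>q<n. g j q * (- TH q \<gamma> \<mu>))"
      unfolding Q_def TH_def using inv_der[OF tau_der] a by (intro sum.cong refl) simp
    also have "\<dots> = - X j \<gamma> \<mu>" by (simp add: X_lin sum_negf)
    finally show "P \<mu> \<gamma> * (\<Sum>q<n. g j q * Q q \<gamma> \<mu>) = TH c \<mu> \<gamma> * X j \<gamma> \<mu>"
      using p by simp
  qed
  also have "\<dots> = t2 (TH c) (X j)" unfolding t2_def ..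
  finally show ?thesis .
qed

lemma hE_eq:
  assumes c: "c < n"
  shows "hE h n m g tau Am Ai j c = - tau c (mtr m (X j)) + h * t2 (TH c) (X j)"
  unfolding hE_def trG3 isder_minus[OF tau_der[OF c]] S_eq[OF c] ..

lemma H_eq:
  "(\<Sum>c<n. g s c * hE h n m g tau Am Ai j c) = - tP s (mtr m (X j)) + h * t2 (X s) (X j)"
proof -
  have "(\<Sum>c<n. g s c * hE h n m g tau Am Ai j c)
      = (\<Sum>c<n. g s c * (- tau c (mtr m (X j)) + h * t2 (TH c) (X j)))"
    using hE_eq by (intro sum.cong refl) simp
  also have "\<dots> = - (\<Sum>c<n. g s c * tau c (mtr m (X j))) + h * (\<Sum>c<n. g s c * t2 (TH c) (X j))"
    (is "?L = ?R")
  proof -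
    have "?L = (\<Sum>c<n. - (g s c * tau c (mtr m (X j))) + h * (g s c * t2 (TH c) (X j)))"
      by (intro sum.cong refl) (simp add: algebra_simps)
    also have "\<dots> = ?R" by (simp only: sum.distrib sum_negf sum_distrib_left)
    finally show ?thesis .
  qed
  also have "(\<Sum>c<n. g s c * tau c (mtr m (X j))) = tP s (mtr m (X j))"
    by (simp add: tauP_def)
  also have "(\<Sum>c<n. g s c * t2 (TH c) (X j)) = t2 (X s) (X j)"
  proof -
    have "(\<Sum>c<n. g s c * t2 (TH c) (X j)) = (\<Sum>x<m. \<Sum>y<m. \<Sum>c<n. g s c * (TH c x y * X j y x))"
      unfolding t2_def by (rule swap_in2)
    also have "\<dots> = (\<Sum>x<m. \<Sum>y<m. X s x y * X j y x)"
      by (simp add: X_lin[of s] sum_distrib_right mult.assoc)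
    finally show ?thesis unfolding t2_def .
  qed
  finally show ?thesis .
qed

end



context L
begin

lemma D2_sym:
  assumes "i < n" "s < n"
  shows "(\<Sum>l<n. g s l * tP i (tau l x)) = (\<Sum>l<n. g i l * tP s (tau l x))"
proof -
  have "(\<Sum>l<n. g s l * tP i (tau l x)) = (\<Sum>l<n. \<Sum>j<n. g s l * g i j * tau j (tau l x))"
    by (simp add: tauP_def sum_distrib_left mult.assoc)
  also have "\<dots> = (\<Sum>j<n. \<Sum>l<n. g s l * g i j * tau j (tau l x))"
    by (rule sum.swap)
  also have "\<dots> = (\<Sum>j<n. \<Sum>l<n. g i j * g s l * tau l (tau j x))"
  proof (intro sum.cong refl)
    fix j l assume jl: "j \<in> {..<n}" "l \<in> {..<n}"
    have e: "tau j (tau l x) = tau l (tau j x)" using comm jl by blast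
    show "g s l * g i j * tau j (tau l x) = g i j * g s l * tau l (tau j x)"
      by (subst e) (simp only: mult.commute[of "g s l" "g i j"])
  qed
  also have "\<dots> = (\<Sum>l<n. g i l * tP s (tau l x))"
    by (simp add: tauP_def sum_distrib_left mult.assoc)
  finally show ?thesis .
qed

lemma tPtP:
  "tP i (tP s x) = (\<Sum>l<n. g s l * tP i (tau l x)) + (\<Sum>l<n. tau l x * tP i (g s l))"
proof -
  have "tP i (tP s x) = (\<Sum>l<n. g s l * tP i (tau l x) + tau l x * tP i (g s l))"
    by (simp only: tauP_def[of n g tau s x] isder_sum[OF tP_der] isder_mult[OF tP_der])
  thus ?thesis by (simp only: sum.distrib)
qed

lemma CC:
  assumes hs: "i < n" "s < n" and p: "p < n"
  shows "tP i (g s p) = tP s (g i p)"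
proof -
  have z: "(\<Sum>l<n. tau l x * (tP i (g s l) - tP s (g i l))) = 0" for x
  proof -
    have "tP i (tP s x) = tP s (tP i x)" using commP hs by blast
    hence "(\<Sum>l<n. tau l x * tP i (g s l)) = (\<Sum>l<n. tau l x * tP s (g i l))"
      using tPtP[of i s x] tPtP[of s i x] D2_sym[OF hs, of x] by simp
    thus ?thesis
      by (simp add: sum_subtractf right_diff_distrib)
  qed
  have kd0: "kderiv phi (\<lambda>x. 0::'a)" by (simp add: kderiv_def)
  from basis kd0 have uq: "\<exists>!a. (\<forall>r\<ge>n. a r = 0) \<and> (\<lambda>x. 0::'a) = (\<lambda>x. \<Sum>r<n. a r * tau r x)"
    by blast
  define a2 where "a2 l = (if l < n then tP i (g s l) - tP s (g i l) else 0)" for l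
  have h1: "(\<forall>r\<ge>n. (\<lambda>_. 0::'a) r = 0) \<and> (\<lambda>x. 0::'a) = (\<lambda>x. \<Sum>r<n. (\<lambda>_. 0) r * tau r x)"
    by simp
  have "(\<lambda>x. \<Sum>r<n. a2 r * tau r x) = (\<lambda>x. 0)"
  proof (rule ext)
    fix x
    have "(\<Sum>r<n. a2 r * tau r x) = (\<Sum>l<n. tau l x * (tP i (g s l) - tP s (g i l)))"
      by (intro sum.cong refl) (simp add: a2_def mult.commute)
    then show "(\<Sum>r<n. a2 r * tau r x) = 0" using z by simp
  qed
  hence h2: "(\<forall>r\<ge>n. a2 r = 0) \<and> (\<lambda>x. 0::'a) = (\<lambda>x. \<Sum>r<n. a2 r * tau r x)"
    by (simp add: a2_def)
  obtain a0 where a0: "\<And>y. (\<forall>r\<ge>n. y r = 0) \<and> (\<lambda>x. 0::'a) = (\<lambda>x. \<Sum>r<n. y r * tau r x) \<Longrightarrow> y = a0"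
    using uq by (elim ex1E) blast
  have "a2 = (\<lambda>_. 0)" using a0[OF h1] a0[OF h2] by simp
  hence "a2 p = 0" by simp
  thus ?thesis using p by (simp add: a2_def)
qed

lemma TR:
  assumes ab: "a < n" "b < n"
  shows "tP a (mtr m (X b)) = tP b (mtr m (X a))"
proof -
  have "tP a (mtr m (X b)) = (\<Sum>x<m. tP a (X b x x))"
    by (simp add: mtr_def isder_sum[OF tP_der])
  also have "\<dots> = (\<Sum>x<m. tP b (X a x x) - mmul m (X a) (X b) x x + mmul m (X b) (X a) x x)"
    by (intro sum.cong refl MC[OF ab]) auto
  also have "\<dots> = tP b (mtr m (X a)) - mtr m (mmul m (X a) (X b)) + mtr m (mmul m (X b) (X a))"
    by (simp add: mtr_def isder_sum[OF tP_der] sum.distrib sum_subtractf)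
  also have "\<dots> = tP b (mtr m (X a))"
    by (simp add: mtr_mmul t2_comm[of "X a" "X b"])
  finally show ?thesis .
qed

lemma t2_MC1:
  assumes ab: "a < n" "b < n"
  shows "t2 (mapm (tP a) (X b)) Q = t2 (mapm (tP b) (X a)) Q - t2 (mmul m (X a) (X b)) Q
          + t2 (mmul m (X b) (X a)) Q"
proof -
  have "t2 (mapm (tP a) (X b)) Q = (\<Sum>x<m. \<Sum>y<m. tP b (X a x y) * Q y x
          - mmul m (X a) (X b) x y * Q y x + mmul m (X b) (X a) x y * Q y x)"
    unfolding t2_def mapm_def
  proof (intro sum.cong refl)
    fix x y assume xy: "x \<in> {..<m}" "y \<in> {..<m}"
    have e: "tP a (X b x y) = tP b (X a x y) - mmul m (X a) (X b) x y + mmul m (X b) (X a) x y"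
      using xy by (intro MC[OF ab]) auto
    show "tP a (X b x y) * Q y x = tP b (X a x y) * Q y x
          - mmul m (X a) (X b) x y * Q y x + mmul m (X b) (X a) x y * Q y x"
      by (simp only: e distrib_right left_diff_distrib)
  qed
  thus ?thesis unfolding t2_def mapm_def by (simp only: sum.distrib sum_subtractf)
qed

lemma t2_MC2:
  assumes ab: "a < n" "b < n"
  shows "t2 Q (mapm (tP a) (X b)) = t2 Q (mapm (tP b) (X a)) - t2 Q (mmul m (X a) (X b))
          + t2 Q (mmul m (X b) (X a))"
  using t2_MC1[OF ab, of Q] by (simp add: t2_comm[of Q])

lemma A13:
  assumes "i < n" "s < n"
  shows "(\<Sum>c<n. g s c * tP i (hE h n m g tau Am Ai j c))
       + (\<Sum>c<n. g s c * (\<Sum>p<n. hE h n m g tau Am Ai j p * tau c (g i p)))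
       = tP i (\<Sum>c<n. g s c * hE h n m g tau Am Ai j c)"
proof -
  let ?E = "hE h n m g tau Am Ai j"
  have 1: "tP i (\<Sum>c<n. g s c * ?E c) = (\<Sum>c<n. g s c * tP i (?E c)) + (\<Sum>c<n. ?E c * tP i (g s c))"
    by (simp add: isder_sum[OF tP_der] isder_mult[OF tP_der] sum.distrib)
  have "(\<Sum>c<n. g s c * (\<Sum>p<n. ?E p * tau c (g i p))) = (\<Sum>p<n. \<Sum>c<n. g s c * (?E p * tau c (g i p)))"
    by (rule swap_in)
  also have "\<dots> = (\<Sum>p<n. ?E p * tP s (g i p))"
    by (simp add: tauP_def sum_distrib_left mult_ac)
  also have "\<dots> = (\<Sum>p<n. ?E p * tP i (g s p))"
    using CC assms by (intro sum.cong refl) simp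
  finally show ?thesis using 1 by simp
qed

lemma T1_eq:
  assumes "s < n"
  shows "(\<Sum>c<n. g s c * (\<Sum>\<mu><m. \<Sum>\<nu><m. G3 n m g tau Am Ai i \<mu> \<nu> * tau c (G3 n m g tau Am Ai j \<nu> \<mu>)
            - G3 n m g tau Am Ai j \<nu> \<mu> * tau c (G3 n m g tau Am Ai i \<mu> \<nu>)))
       = t2 (X i) (mapm (tP s) (X j)) - t2 (mapm (tP s) (X i)) (X j)"
proof -
  have "(\<Sum>c<n. g s c * (\<Sum>\<mu><m. \<Sum>\<nu><m. G3 n m g tau Am Ai i \<mu> \<nu> * tau c (G3 n m g tau Am Ai j \<nu> \<mu>)
            - G3 n m g tau Am Ai j \<nu> \<mu> * tau c (G3 n m g tau Am Ai i \<mu> \<nu>)))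
      = (\<Sum>c<n. g s c * (\<Sum>\<mu><m. \<Sum>\<nu><m. X i \<mu> \<nu> * tau c (X j \<nu> \<mu>) - X j \<nu> \<mu> * tau c (X i \<mu> \<nu>)))"
  proof (rule sum.cong[OF refl])
    fix c assume c: "c \<in> {..<n}"
    have "(\<Sum>\<mu><m. \<Sum>\<nu><m. G3 n m g tau Am Ai i \<mu> \<nu> * tau c (G3 n m g tau Am Ai j \<nu> \<mu>)
            - G3 n m g tau Am Ai j \<nu> \<mu> * tau c (G3 n m g tau Am Ai i \<mu> \<nu>))
        = (\<Sum>\<mu><m. \<Sum>\<nu><m. X i \<mu> \<nu> * tau c (X j \<nu> \<mu>) - X j \<nu> \<mu> * tau c (X i \<mu> \<nu>))"
      using c by (intro sum.cong refl) (simp add: G3_eq isder_minus[OF tau_der])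
    thus "g s c * (\<Sum>\<mu><m. \<Sum>\<nu><m. G3 n m g tau Am Ai i \<mu> \<nu> * tau c (G3 n m g tau Am Ai j \<nu> \<mu>)
            - G3 n m g tau Am Ai j \<nu> \<mu> * tau c (G3 n m g tau Am Ai i \<mu> \<nu>))
        = g s c * (\<Sum>\<mu><m. \<Sum>\<nu><m. X i \<mu> \<nu> * tau c (X j \<nu> \<mu>) - X j \<nu> \<mu> * tau c (X i \<mu> \<nu>))"
      by simp
  qed
  also have "\<dots> = (\<Sum>\<mu><m. \<Sum>\<nu><m. \<Sum>c<n. g s c * (X i \<mu> \<nu> * tau c (X j \<nu> \<mu>) - X j \<nu> \<mu> * tau c (X i \<mu> \<nu>)))"
    by (rule swap_in2)
  also have "\<dots> = (\<Sum>\<mu><m. \<Sum>\<nu><m. X i \<mu> \<nu> * tP s (X j \<nu> \<mu>) - X j \<nu> \<mu> * tP s (X i \<mu> \<nu>))"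
    by (intro sum.cong refl) (simp add: tauP_def sum_subtractf sum_distrib_left right_diff_distrib mult_ac)
  also have "\<dots> = t2 (X i) (mapm (tP s) (X j)) - t2 (mapm (tP s) (X i)) (X j)"
    unfolding t2_def mapm_def by (simp add: sum_subtractf mult.commute)
  finally show ?thesis .
qed

lemma recover:
  assumes q: "q < n"
  shows "(\<Sum>s<n. gi q s * (\<Sum>c<n. g s c * F c)) = F q"
proof -
  have "(\<Sum>s<n. gi q s * (\<Sum>c<n. g s c * F c)) = (\<Sum>c<n. \<Sum>s<n. gi q s * (g s c * F c))"
    by (rule swap_in)
  also have "\<dots> = (\<Sum>c<n. mmul n gi g q c * F c)"
    by (simp add: mmul_def sum_distrib_right mult.assoc)
  also have "\<dots> = (\<Sum>c<n. if c = q then F c else 0)"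
    using ginv q unfolding is_inverse_def by (intro sum.cong refl) auto
  also have "\<dots> = F q" using q by simp
  finally show ?thesis .
qed

end



lemma sum_cmul: "(\<Sum>c\<in>A. (w c::'a::comm_ring_1) * (k * Y c)) = k * (\<Sum>c\<in>A. w c * Y c)"
  by (simp add: sum_distrib_left mult.left_commute)

lemma lin5: "(\<Sum>c\<in>A. (w c::'a::comm_ring_1) * (- h * a c - b c + d c - e c + f c))
  = - h * (\<Sum>c\<in>A. w c * a c) - (\<Sum>c\<in>A. w c * b c) + (\<Sum>c\<in>A. w c * d c)
    - (\<Sum>c\<in>A. w c * e c) + (\<Sum>c\<in>A. w c * f c)"
proof -
  have "(\<Sum>c\<in>A. w c * (- h * a c - b c + d c - e c + f c))
     = (\<Sum>c\<in>A. - h * (w c * a c) - w c * b c + w c * d c - w c * e c + w c * f c)"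
    by (intro sum.cong refl) (simp add: algebra_simps)
  also have "\<dots> = - h * (\<Sum>c\<in>A. w c * a c) - (\<Sum>c\<in>A. w c * b c) + (\<Sum>c\<in>A. w c * d c)
    - (\<Sum>c\<in>A. w c * e c) + (\<Sum>c\<in>A. w c * f c)"
    by (simp only: sum.distrib sum_subtractf sum_distrib_left)
  finally show ?thesis .
qed

lemma alg: "(P::'a::comm_ring_1) = P' \<Longrightarrow> - hf * (u - v) - (- P + hf * ((v - B + A) + w))
   + (- P' + hf * ((u - A + B) + (w - B + A))) = - hf * (A - B)"
  by (simp add: algebra_simps)

context L
begin

lemma mtr_diff: "mtr m (\<lambda>a b. F a b - G a b) = mtr m F - mtr m G"
  by (simp add: mtr_def sum_subtractf)

lemma RHS_s:
  assumes s: "s < n"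
  shows "(\<Sum>c<n. g s c * RHSform hf n m g gi tau Am Ai i j c)
       = - hf * (t2 (mmul m (X i) (X j)) (X s) - t2 (mmul m (X j) (X i)) (X s))"
proof -
  define R where "R r = t2 (mmul m (X i) (X j)) (X r) - t2 (mmul m (X j) (X i)) (X r)" for r
  have r: "RHSform hf n m g gi tau Am Ai i j c = - hf * (\<Sum>r<n. R r * gi c r)" for c
    unfolding RHSform_def X_def[symmetric] mtr_diff mtr_mmul R_def ..
  have "(\<Sum>c<n. g s c * RHSform hf n m g gi tau Am Ai i j c)
      = - hf * (\<Sum>c<n. g s c * (\<Sum>r<n. R r * gi c r))"
    unfolding r by (rule sum_cmul)
  also have "(\<Sum>c<n. g s c * (\<Sum>r<n. R r * gi c r)) = (\<Sum>r<n. \<Sum>c<n. g s c * (R r * gi c r))"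
    by (rule swap_in)
  also have "\<dots> = (\<Sum>r<n. R r * mmul n g gi s r)"
    by (simp add: mmul_def sum_distrib_left mult_ac)
  also have "\<dots> = (\<Sum>r<n. if r = s then R r else 0)"
    using ginv s unfolding is_inverse_def by (intro sum.cong refl) auto
  also have "\<dots> = R s" using s by simp
  finally show ?thesis unfolding R_def .
qed

lemma B_s:
  assumes ijs: "i < n" "j < n" "s < n"
  shows "(\<Sum>c<n. g s c * Bform (phi h) n m g tau Am Ai i j c)
       = - phi h * (t2 (mmul m (X i) (X j)) (X s) - t2 (mmul m (X j) (X i)) (X s))"
proof -
  define hf where "hf = phi h"
  define E where "E k = hE hf n m g tau Am Ai k" for k
  define T1 where "T1 c = (\<Sum>\<mu><m. \<Sum>\<nu><m. G3 n m g tau Am Ai i \<mu> \<nu> * tau c (G3 n m g tau Am Ai j \<nu> \<mu>)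
            - G3 n m g tau Am Ai j \<nu> \<mu> * tau c (G3 n m g tau Am Ai i \<mu> \<nu>))" for c
  have bc: "Bform hf n m g tau Am Ai i j c = - hf * T1 c - tP i (E j c) + tP j (E i c)
      - (\<Sum>p<n. E j p * tau c (g i p)) + (\<Sum>p<n. E i p * tau c (g j p))" for c
    unfolding Bform_def dform_def tauP_def T1_def E_def by (rule refl)
  have H: "(\<Sum>c<n. g s c * E k c) = - tP s (mtr m (X k)) + hf * t2 (X s) (X k)" for k
    unfolding E_def by (rule H_eq)
  have tH: "tP a (\<Sum>c<n. g s c * E k c) = - tP a (tP s (mtr m (X k)))
      + hf * (t2 (mapm (tP a) (X s)) (X k) + t2 (X s) (mapm (tP a) (X k)))" for a k
    unfolding H hf_def by (simp only: isder_add[OF tP_der] isder_minus[OF tP_der] tP_const t2_der[OF tP_der])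
  have "(\<Sum>c<n. g s c * Bform hf n m g tau Am Ai i j c)
      = - hf * (\<Sum>c<n. g s c * T1 c) - (\<Sum>c<n. g s c * tP i (E j c)) + (\<Sum>c<n. g s c * tP j (E i c))
        - (\<Sum>c<n. g s c * (\<Sum>p<n. E j p * tau c (g i p))) + (\<Sum>c<n. g s c * (\<Sum>p<n. E i p * tau c (g j p)))"
    unfolding bc by (rule lin5)
  also have "\<dots> = - hf * (\<Sum>c<n. g s c * T1 c)
      - ((\<Sum>c<n. g s c * tP i (E j c)) + (\<Sum>c<n. g s c * (\<Sum>p<n. E j p * tau c (g i p))))
      + ((\<Sum>c<n. g s c * tP j (E i c)) + (\<Sum>c<n. g s c * (\<Sum>p<n. E i p * tau c (g j p))))"
    by (simp add: algebra_simps)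
  also have "\<dots> = - hf * (t2 (X i) (mapm (tP s) (X j)) - t2 (mapm (tP s) (X i)) (X j))
      - tP i (\<Sum>c<n. g s c * E j c) + tP j (\<Sum>c<n. g s c * E i c)"
    unfolding T1_def T1_eq[OF ijs(3)] E_def A13[OF ijs(1,3)] A13[OF ijs(2,3)] ..
  also have "\<dots> = - hf * (t2 (mmul m (X i) (X j)) (X s) - t2 (mmul m (X j) (X i)) (X s))"
  proof -
    have f1: "t2 (X i) (mapm (tP s) (X j)) = t2 (mapm (tP s) (X j)) (X i)" by (rule t2_comm)
    have f2: "t2 (mapm (tP i) (X s)) (X j) = t2 (mapm (tP s) (X i)) (X j)
        - t2 (mmul m (X i) (X s)) (X j) + t2 (mmul m (X s) (X i)) (X j)"
      by (rule t2_MC1) (use ijs in auto)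
    have f3: "t2 (mapm (tP j) (X s)) (X i) = t2 (mapm (tP s) (X j)) (X i)
        - t2 (mmul m (X j) (X s)) (X i) + t2 (mmul m (X s) (X j)) (X i)"
      by (rule t2_MC1) (use ijs in auto)
    have f4: "t2 (X s) (mapm (tP j) (X i)) = t2 (X s) (mapm (tP i) (X j))
        - t2 (X s) (mmul m (X j) (X i)) + t2 (X s) (mmul m (X i) (X j))"
      by (rule t2_MC2) (use ijs in auto)
    have f5: "tP i (tP s (mtr m (X j))) = tP j (tP s (mtr m (X i)))"
    proof -
      have "tP i (tP s (mtr m (X j))) = tP s (tP i (mtr m (X j)))" using commP ijs by blast
      also have "\<dots> = tP s (tP j (mtr m (X i)))" using TR[OF ijs(1,2)] by simp
      also have "\<dots> = tP j (tP s (mtr m (X i)))" using commP ijs by metis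
      finally show ?thesis .
    qed
    have c1: "t2 (mmul m (X i) (X s)) (X j) = t2 (mmul m (X j) (X i)) (X s)" by (rule t2_cyc)
    have c2: "t2 (mmul m (X s) (X i)) (X j) = t2 (mmul m (X i) (X j)) (X s)"
      by (rule trans[OF t2_cyc t2_cyc])
    have c3: "t2 (mmul m (X j) (X s)) (X i) = t2 (mmul m (X i) (X j)) (X s)" by (rule t2_cyc)
    have c4: "t2 (mmul m (X s) (X j)) (X i) = t2 (mmul m (X j) (X i)) (X s)"
      by (rule trans[OF t2_cyc t2_cyc])
    have c5: "t2 (X s) (mmul m (X j) (X i)) = t2 (mmul m (X j) (X i)) (X s)" by (rule t2_comm)
    have c6: "t2 (X s) (mmul m (X i) (X j)) = t2 (mmul m (X i) (X j)) (X s)" by (rule t2_comm)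
    show ?thesis unfolding tH f1 f2 f3 f4 c1 c2 c3 c4 c5 c6
      by (rule alg[OF f5])
  qed
  finally show ?thesis unfolding hf_def .
qed

lemma final:
  assumes ij: "i < n" "j < n"
  shows "\<forall>q<n. Bform (phi h) n m g tau Am Ai i j q = RHSform (phi h) n m g gi tau Am Ai i j q"
proof (intro allI impI)
  fix q assume q: "q < n"
  have e: "(\<Sum>c<n. g s c * Bform (phi h) n m g tau Am Ai i j c)
         = (\<Sum>c<n. g s c * RHSform (phi h) n m g gi tau Am Ai i j c)" if "s < n" for s
    using B_s[OF ij that] RHS_s[OF that] by simp
  have "Bform (phi h) n m g tau Am Ai i j q
      = (\<Sum>s<n. gi q s * (\<Sum>c<n. g s c * Bform (phi h) n m g tau Am Ai i j c))"
    using recover[OF q] by simp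
  also have "\<dots> = (\<Sum>s<n. gi q s * (\<Sum>c<n. g s c * RHSform (phi h) n m g gi tau Am Ai i j c))"
    using e by (intro sum.cong refl) simp
  also have "\<dots> = RHSform (phi h) n m g gi tau Am Ai i j q"
    using recover[OF q] by simp
  finally show "Bform (phi h) n m g tau Am Ai i j q = RHSform (phi h) n m g gi tau Am Ai i j q" .
qed

end


theorem mainTheorem1:
  fixes phi :: "'k::comm_ring_1 \<Rightarrow> 'a::comm_ring_1"
    and hk :: 'k
    and n m :: nat
    and tau :: "nat \<Rightarrow> 'a \<Rightarrow> 'a"
    and g gi Am Ai :: "nat \<Rightarrow> nat \<Rightarrow> 'a"
    and i j :: nat
  assumes hom: "is_ring_hom phi"
    and half: "2 * hk = 1"
    and der: "\<forall>r<n. kderiv phi (tau r)"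
    and basis: "\<forall>D. kderiv phi D \<longrightarrow>
        (\<exists>!a. (\<forall>r\<ge>n. a r = 0) \<and> D = (\<lambda>x. \<Sum>r<n. a r * tau r x))"
    and comm: "\<forall>r<n. \<forall>s<n. \<forall>x. tau r (tau s x) = tau s (tau r x)"
    and ginv: "is_inverse n g gi"
    and commP: "\<forall>r<n. \<forall>s<n. \<forall>x. tauP n g tau r (tauP n g tau s x) = tauP n g tau s (tauP n g tau r x)"
    and Ainv: "is_inverse m Am Ai"
    and ij: "i < n" "j < n"
  shows "\<forall>q<n. Bform (phi hk) n m g tau Am Ai i j q = RHSform (phi hk) n m g gi tau Am Ai i j q"
proof -
  interpret L phi n m tau g gi Am Ai
    using der basis comm ginv commP Ainv by unfold_locales
  show ?thesis by (rule final[OF ij])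
qed

end
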